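(* Let $f_1,\ldots,f_k\in\mathbb{R}[X_1,\ldots,X_n]$ with $\deg f_i<d$ for all $i$, and suppose that the origin is not a solution of the system $f_1\ge 0,\ldots,f_k\ge 0$ and that the solution set $\{x\in\mathbb{R}^n: f_1(x)\ge0,\ldots,f_k(x)\ge 0\}$ is bounded. Let $D$ be the minimal even integer not less than $kd+1$ and, for a parameter $\varepsilon$, let $$g(\varepsilon)=\prod_{1\le i\le k}(f_i+\varepsilon)-\varepsilon^{k+1}\sum_{1\le j\le n}X_j^{D}.$$ If the system $f_1\ge 0,\ldots,f_k\ge 0$ has a solution in $\mathbb{R}^n$, then there is a solution $v'$ of it which is a limit of real roots of the system $\frac{\partial g(\varepsilon)}{\partial X_1}=\cdots=\frac{\partial g(\varepsilon)}{\partial X_n}=0$ as $\varepsilon\to 0^+$; that is, there are positive numbers $\varepsilon_j\to 0$ and points $v_j\in\mathbb{R}^n$ with $\frac{\partial g(\varepsilon_j)}{\partial X_l}(v_j)=0$ for all $1\le l\le n$ such that $v_j\to v'$. *)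

theory Defs
  imports "HOL-Analysis.Analysis"
begin

definition poly_deg_lt :: "nat \<Rightarrow> (real^'n \<Rightarrow> real) \<Rightarrow> bool" where
  "poly_deg_lt d f \<longleftrightarrow>
     (\<exists>c :: ('n \<Rightarrow> nat) \<Rightarrow> real.
        finite {\<alpha>. c \<alpha> \<noteq> 0} \<and>
        (\<forall>\<alpha>. c \<alpha> \<noteq> 0 \<longrightarrow> (\<Sum>i\<in>UNIV. \<alpha> i) < d) \<and>
        (\<forall>x. f x = (\<Sum>\<alpha>\<in>{\<alpha>. c \<alpha> \<noteq> 0}. c \<alpha> * (\<Prod>i\<in>UNIV. (x$i) ^ (\<alpha> i)))))"

definition min_even_ge :: "nat \<Rightarrow> nat" where
  "min_even_ge m = (if even m then m else m + 1)"

definition gfun :: "nat \<Rightarrow> nat \<Rightarrow> (nat \<Rightarrow> real^'n \<Rightarrow> real) \<Rightarrow> real \<Rightarrow> real^'n \<Rightarrow> real" where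
  "gfun k d f \<epsilon> x =
     (\<Prod>i<k. f i x + \<epsilon>) - \<epsilon> ^ (k + 1) * (\<Sum>j\<in>UNIV. (x$j) ^ min_even_ge (k * d + 1))"

definition partial_zero :: "(real^'n \<Rightarrow> real) \<Rightarrow> 'n \<Rightarrow> real^'n \<Rightarrow> bool" where
  "partial_zero h l x \<longleftrightarrow> ((\<lambda>t. h (x + t *\<^sub>R axis l 1)) has_real_derivative 0) (at 0)"

end

theory Submission
  imports Defs
begin

lemma differentiable_prod':
  fixes f :: "'i \<Rightarrow> 'a::real_normed_vector \<Rightarrow> real"
  assumes "finite A" "\<And>a. a \<in> A \<Longrightarrow> f a differentiable (at x)"
  shows "(\<lambda>x. \<Prod>a\<in>A. f a x) differentiable (at x)"
  using assms by (induction A rule: finite_induct) auto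

lemma comp_diff: "(\<lambda>x::real^'n. x $ i) differentiable (at x)"
  by (rule bounded_linear_imp_differentiable[OF bounded_linear_vec_nth])

lemma poly_diff:
  assumes "poly_deg_lt d f" shows "f differentiable (at x)"
proof -
  obtain c where c: "\<forall>x. f x = (\<Sum>\<alpha>\<in>{\<alpha>. c \<alpha> \<noteq> 0}. c \<alpha> * (\<Prod>i\<in>UNIV. (x$i) ^ (\<alpha> i)))"
    and fin: "finite {\<alpha>. c \<alpha> \<noteq> 0}"
    using assms unfolding poly_deg_lt_def by blast
  have "f = (\<lambda>x. \<Sum>\<alpha>\<in>{\<alpha>. c \<alpha> \<noteq> 0}. c \<alpha> * (\<Prod>i\<in>UNIV. (x$i) ^ (\<alpha> i)))"
    using c by auto
  moreover have "(\<lambda>x. \<Sum>\<alpha>\<in>{\<alpha>. c \<alpha> \<noteq> 0}. c \<alpha> * (\<Prod>i\<in>UNIV. (x$i) ^ (\<alpha> i))) differentiable (at x)"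
    by (intro differentiable_sum fin ballI differentiable_mult differentiable_const
        differentiable_prod' finite differentiable_power comp_diff)
  ultimately show ?thesis by simp
qed

lemma g_diff:
  assumes "\<And>i. i < k \<Longrightarrow> poly_deg_lt d (f i)"
  shows "gfun k d f e differentiable (at x)"
proof -
  have eq: "gfun k d f e = (\<lambda>y. (\<Prod>i<k. f i y + e) - e ^ (k + 1) * (\<Sum>j\<in>UNIV. (y$j) ^ min_even_ge (k * d + 1)))"
    by (rule ext) (simp add: gfun_def)
  have fi: "\<And>i. i \<in> {..<k} \<Longrightarrow> (\<lambda>y. f i y + e) differentiable (at x)"
    using poly_diff[OF assms] by simp
  have P1: "(\<lambda>y. \<Prod>i<k. f i y + e) differentiable (at x)"
    by (rule differentiable_prod'[where f="\<lambda>i y. f i y + e", OF finite_lessThan fi])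
  have P2: "(\<lambda>y. \<Sum>j\<in>UNIV. (y$j) ^ min_even_ge (k * d + 1)) differentiable (at x)"
    by (intro differentiable_sum finite ballI differentiable_power comp_diff)
  have P: "(\<lambda>y. (\<Prod>i<k. f i y + e) - e ^ (k + 1) * (\<Sum>j\<in>UNIV. (y$j) ^ min_even_ge (k * d + 1))) differentiable (at x)"
    by (rule differentiable_diff[OF P1 differentiable_mult[OF differentiable_const P2]])
  show ?thesis unfolding eq by (rule P)
qed

lemma partial_zero_max:
  fixes h :: "real^'n \<Rightarrow> real"
  assumes "\<And>x. h differentiable (at x)" "r > 0" "\<And>y. y \<in> ball v r \<Longrightarrow> h y \<le> h v"
  shows "partial_zero h l v"
proof -
  let ?p = "\<lambda>t. h (v + t *\<^sub>R axis l 1)"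
  have "((\<lambda>t. v + t *\<^sub>R axis l 1) has_derivative (\<lambda>t. t *\<^sub>R axis l 1)) (at 0)"
    by (auto intro!: derivative_eq_intros)
  then have "(\<lambda>t. v + t *\<^sub>R axis l 1) differentiable (at 0)"
    by (rule differentiableI)
  then have "?p differentiable (at 0)"
    by (rule differentiable_compose[OF assms(1)])
  then have D: "(?p has_real_derivative deriv ?p 0) (at 0)"
    using DERIV_deriv_iff_real_differentiable by blast
  have "deriv ?p 0 = 0"
  proof (rule DERIV_local_max[OF D \<open>r > 0\<close>], intro allI impI)
    fix t :: real assume "\<bar>0 - t\<bar> < r"
    then have "v + t *\<^sub>R axis l 1 \<in> ball v r" by (simp add: dist_norm)
    then show "?p t \<le> ?p 0" using assms(3) by simp
  qed
  then show ?thesis unfolding partial_zero_def using D by simp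
qed



theorem lemma5p1:
  fixes f :: "nat \<Rightarrow> real^'n \<Rightarrow> real" and k d :: nat
  assumes deg: "\<And>i. i < k \<Longrightarrow> poly_deg_lt d (f i)"
    and origin: "\<not> (\<forall>i<k. f i 0 \<ge> 0)"
    and bdd: "bounded {x. \<forall>i<k. f i x \<ge> 0}"
    and sol: "\<exists>x. \<forall>i<k. f i x \<ge> 0"
  shows "\<exists>v' (\<epsilon>::nat \<Rightarrow> real) (v::nat \<Rightarrow> real^'n).
           (\<forall>i<k. f i v' \<ge> 0) \<and>
           (\<forall>j. \<epsilon> j > 0) \<and> \<epsilon> \<longlonglongrightarrow> 0 \<and>
           (\<forall>j l. partial_zero (gfun k d f (\<epsilon> j)) l (v j)) \<and>
           v \<longlonglongrightarrow> v'"
proof -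
  have k0: "k > 0" using origin by auto
  have isc: "\<And>i x. i < k \<Longrightarrow> isCont (f i) x"
    using poly_diff[OF deg] differentiable_imp_continuous_within by blast
  have cont: "\<And>i S. i < k \<Longrightarrow> continuous_on S (f i)"
    using isc by (simp add: continuous_at_imp_continuous_on)
  define K where "K = {x. \<forall>i<k. f i x \<ge> 0}"
  obtain R where R: "R > 0" "K \<subseteq> ball 0 R"
    using bounded_subset_ballD[OF bdd] unfolding K_def by blast
  define \<psi> where "\<psi> = (\<lambda>x. \<Sum>i<k. min 0 (f i x))"
  have psi_le: "\<psi> x \<le> min 0 (f i x)" if "i < k" for x i
  proof -
    have "\<psi> x = min 0 (f i x) + (\<Sum>j\<in>{..<k} - {i}. min 0 (f j x))"
      unfolding \<psi>_def using that by (simp add: sum.remove)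
    moreover have "(\<Sum>j\<in>{..<k} - {i}. min 0 (f j x)) \<le> 0"
      by (rule sum_nonpos) simp
    ultimately show ?thesis by linarith
  qed
  have psi_neg: "\<psi> x < 0" if "x \<in> sphere 0 R" for x
  proof -
    have "x \<notin> K" using R that by auto
    then obtain i where "i < k" "f i x < 0" unfolding K_def by auto
    then show ?thesis using psi_le[of i x] by simp
  qed
  have psi_cont: "continuous_on S \<psi>" for S :: "(real^'n) set"
    unfolding \<psi>_def by (intro continuous_on_sum continuous_on_min continuous_on_const cont) simp
  obtain \<delta> where \<delta>: "\<delta> > 0" "\<And>x. x \<in> sphere 0 R \<Longrightarrow> \<exists>i<k. f i x < -\<delta>"
  proof (cases "sphere (0::real^'n) R = {}")
    case True
    then show ?thesis using that[of 1] by auto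
  next
    case False
    obtain m where m: "m \<in> sphere 0 R" "\<And>y. y \<in> sphere 0 R \<Longrightarrow> \<psi> y \<le> \<psi> m"
      using continuous_attains_sup[OF compact_sphere False psi_cont] by blast
    define \<delta> where "\<delta> = - \<psi> m / (2 * real k)"
    have pm: "\<psi> m < 0" using psi_neg m by blast
    have dpos: "\<delta> > 0" unfolding \<delta>_def using pm k0 by (intro divide_pos_pos) auto
    show ?thesis
    proof (rule that[OF dpos])
      fix x :: "real^'n" assume x: "x \<in> sphere 0 R"
      show "\<exists>i<k. f i x < -\<delta>"
      proof (rule ccontr)
        assume "\<not> ?thesis"
        then have "\<forall>i\<in>{..<k}. -\<delta> \<le> min 0 (f i x)" using dpos by auto
        then have "of_nat (card {..<k}) * (-\<delta>) \<le> \<psi> x"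
          unfolding \<psi>_def using sum_bounded_below[of "{..<k}" "-\<delta>" "\<lambda>i. min 0 (f i x)"] by blast
        then have "real k * (-\<delta>) \<le> \<psi> x" by simp
        moreover have "real k * (-\<delta>) = \<psi> m / 2" unfolding \<delta>_def using k0 by simp
        ultimately show False using m(2)[OF x] pm by simp
      qed
    qed
  qed
  define D where "D = min_even_ge (k * d + 1)"
  have evD: "even D" unfolding D_def min_even_ge_def by auto
  define S where "S = (\<lambda>x::real^'n. \<Sum>j\<in>UNIV. (x$j) ^ D)"
  have Snn: "S x \<ge> 0" for x unfolding S_def using evD by (simp add: sum_nonneg zero_le_even_power)
  have gS: "gfun k d f \<epsilon> x = (\<Prod>i<k. f i x + \<epsilon>) - \<epsilon> ^ (k + 1) * S x" for \<epsilon> x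
    unfolding gfun_def S_def D_def by simp
  obtain x0 where x0: "\<forall>i<k. f i x0 \<ge> 0" using sol by blast
  define e where "e = min \<delta> (1 / (S x0 + 1))"
  have epos: "e > 0" unfolding e_def using \<delta> Snn[of x0] by simp
  have main: "\<exists>v. norm v \<le> R \<and> (\<forall>i<k. -\<epsilon> < f i v) \<and> (\<forall>l. partial_zero (gfun k d f \<epsilon>) l v)"
    if \<epsilon>: "0 < \<epsilon>" "\<epsilon> < e" for \<epsilon>
  proof -
    define C where "C = cball (0::real^'n) R \<inter> (\<Inter>i\<in>{..<k}. {x. -\<epsilon> \<le> f i x})"
    have "closed (\<Inter>i\<in>{..<k}. {x. -\<epsilon> \<le> f i x})"
      by (intro closed_INT ballI closed_Collect_le continuous_on_const cont) simp
    then have cC: "compact C" unfolding C_def by (intro compact_Int_closed compact_cball)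
    have x0K: "x0 \<in> K" using x0 unfolding K_def by simp
    have "x0 \<in> ball 0 R" using R(2) x0K by blast
    then have x0C: "x0 \<in> C" unfolding C_def using x0 \<epsilon> by auto
    have gc: "continuous_on C (gfun k d f \<epsilon>)"
      by (intro continuous_at_imp_continuous_on ballI differentiable_imp_continuous_within g_diff deg)
    obtain v where v: "v \<in> C" "\<And>y. y \<in> C \<Longrightarrow> gfun k d f \<epsilon> y \<le> gfun k d f \<epsilon> v"
      using continuous_attains_sup[OF cC _ gc] x0C by blast
    have "\<epsilon> * S x0 < 1"
    proof -
      have "\<epsilon> * S x0 \<le> e * S x0" using \<epsilon> Snn[of x0] by (simp add: mult_right_mono)
      also have "\<dots> \<le> (1 / (S x0 + 1)) * S x0" unfolding e_def using Snn[of x0]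
        by (intro mult_right_mono) auto
      also have "\<dots> = S x0 / (S x0 + 1)" by simp
      also have "\<dots> < 1" using Snn[of x0] by simp
      finally show ?thesis .
    qed
    have "\<epsilon> ^ k \<le> (\<Prod>i<k. f i x0 + \<epsilon>)"
    proof -
      have "(\<Prod>i<k. \<epsilon>) \<le> (\<Prod>i<k. f i x0 + \<epsilon>)"
        by (rule prod_mono) (use x0 \<epsilon> in auto)
      then show ?thesis by simp
    qed
    moreover have "\<epsilon> ^ (k+1) * S x0 < \<epsilon> ^ k"
    proof -
      have "\<epsilon> ^ (k+1) * S x0 = \<epsilon> ^ k * (\<epsilon> * S x0)" by simp
      also have "\<dots> < \<epsilon> ^ k * 1"
        using \<open>\<epsilon> * S x0 < 1\<close> \<epsilon> by (intro mult_strict_left_mono) auto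
      finally show ?thesis by simp
    qed
    ultimately have gx0: "gfun k d f \<epsilon> x0 > 0" unfolding gS by linarith
    have vC: "norm v \<le> R" "\<And>i. i < k \<Longrightarrow> -\<epsilon> \<le> f i v" using v(1) unfolding C_def by auto
    have vi: "\<forall>i<k. -\<epsilon> < f i v"
    proof (rule ccontr)
      assume "\<not> ?thesis"
      then obtain i where i: "i < k" "f i v + \<epsilon> = 0" using vC(2) by force
      then have p0: "(\<Prod>i<k. f i v + \<epsilon>) = 0" by (intro prod_zero) auto
      have "gfun k d f \<epsilon> v = - (\<epsilon> ^ (k + 1) * S v)" unfolding gS p0 by simp
      moreover have "\<epsilon> ^ (k + 1) * S v \<ge> 0" using Snn[of v] \<epsilon> by simp
      ultimately have "gfun k d f \<epsilon> v \<le> 0" by linarith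
      then show False using v(2)[OF x0C] gx0 by simp
    qed
    have nv: "norm v < R"
    proof (rule ccontr)
      assume "\<not> ?thesis"
      then have "v \<in> sphere 0 R" using vC(1) by simp
      then obtain i where "i < k" "f i v < -\<delta>" using \<delta>(2) by blast
      moreover have "\<epsilon> \<le> \<delta>" using \<epsilon> unfolding e_def by simp
      ultimately show False using vi by force
    qed
    define U where "U = ball (0::real^'n) R \<inter> (\<Inter>i\<in>{..<k}. {x. -\<epsilon> < f i x})"
    have "open (\<Inter>i\<in>{..<k}. {x. -\<epsilon> < f i x})"
      by (intro open_INT finite_lessThan ballI open_Collect_less continuous_on_const cont) simp
    then have oU: "open U" unfolding U_def by (intro open_Int open_ball)
    have vU: "v \<in> U" unfolding U_def using nv vi by simp
    obtain r where r: "r > 0" "ball v r \<subseteq> U" using openE[OF oU vU] by blast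
    have UC: "U \<subseteq> C" unfolding U_def C_def by (auto simp: less_imp_le)
    have "partial_zero (gfun k d f \<epsilon>) l v" for l
    proof (rule partial_zero_max[OF g_diff[OF deg] r(1)])
      fix y assume "y \<in> ball v r"
      then have "y \<in> C" using r(2) UC by blast
      then show "gfun k d f \<epsilon> y \<le> gfun k d f \<epsilon> v" by (rule v(2))
    qed
    then show ?thesis using vC(1) vi by blast
  qed
  define \<epsilon> where "\<epsilon> = (\<lambda>j. e / 2 * inverse (real (Suc j)))"
  have \<epsilon>pos: "\<epsilon> j > 0" for j unfolding \<epsilon>_def using epos by simp
  have \<epsilon>lt: "\<epsilon> j < e" for j
  proof -
    have "inverse (real (Suc j)) \<le> 1" by (simp add: inverse_le_1_iff)
    then have "\<epsilon> j \<le> e / 2" unfolding \<epsilon>_def using epos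
      by (metis mult.right_neutral mult_left_mono half_gt_zero less_imp_le)
    then show ?thesis using epos by simp
  qed
  have \<epsilon>lim: "\<epsilon> \<longlonglongrightarrow> 0"
    unfolding \<epsilon>_def using tendsto_mult_right_zero[OF LIMSEQ_inverse_real_of_nat] by simp
  have "\<forall>j. \<exists>v. norm v \<le> R \<and> (\<forall>i<k. -\<epsilon> j < f i v) \<and> (\<forall>l. partial_zero (gfun k d f (\<epsilon> j)) l v)"
    using main \<epsilon>pos \<epsilon>lt by blast
  from choice[OF this] obtain v where vv: "\<forall>j. norm (v j) \<le> R \<and> (\<forall>i<k. -\<epsilon> j < f i (v j)) \<and> (\<forall>l. partial_zero (gfun k d f (\<epsilon> j)) l (v j))"
    by blast
  have v: "\<And>j. norm (v j) \<le> R" "\<And>j i. i < k \<Longrightarrow> -\<epsilon> j < f i (v j)"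
    "\<And>j l. partial_zero (gfun k d f (\<epsilon> j)) l (v j)"
    using vv by blast+
  have "\<forall>j. v j \<in> cball 0 R" using v(1) by simp
  then obtain lv r where lr: "lv \<in> cball 0 R" "strict_mono r" "(v \<circ> r) \<longlonglongrightarrow> lv"
    using compact_cball[of 0 R] unfolding compact_def by blast
  have er: "(\<epsilon> \<circ> r) \<longlonglongrightarrow> 0" using LIMSEQ_subseq_LIMSEQ[OF \<epsilon>lim lr(2)] .
  have fl: "f i lv \<ge> 0" if i: "i < k" for i
  proof -
    have t1: "(\<lambda>j. f i ((v \<circ> r) j)) \<longlonglongrightarrow> f i lv"
      by (rule isCont_tendsto_compose[OF isc[OF i] lr(3)])
    have t2: "(\<lambda>j. - (\<epsilon> \<circ> r) j) \<longlonglongrightarrow> - 0" by (rule tendsto_minus[OF er])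
    show ?thesis
      using tendsto_le[OF trivial_limit_sequentially t1 t2] v(2)[OF i] by (simp add: less_imp_le)
  qed
  show ?thesis
    apply (rule exI[of _ lv], rule exI[of _ "\<epsilon> \<circ> r"], rule exI[of _ "v \<circ> r"])
    apply (intro conjI allI impI)
        apply (erule fl)
       apply (simp add: \<epsilon>pos)
      apply (rule er)
     apply (simp add: v(3))
    apply (rule lr(3))
    done
qed

end
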